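(* Let $G=(V,E)$ be a claw-free graph, let $v\in V$ and let $k$ be a positive integer. There exists an independent dominating set of $G$ of size at most $k$ containing $v$ if and only if there exists an independent dominating set of size at most $k-1$ in the induced subgraph $G[V\setminus N[v]]$.
   Context: Graphs are finite, simple, undirected; a graph is claw-free if it has no induced $K_{1,3}$. $N[v]$ is the closed neighbourhood of $v$. An independent dominating set is a set $S$ of pairwise non-adjacent vertices such that every vertex outside $S$ has a neighbour in $S$. *)

theory Defs
  imports Main
begin

definition simple_graph :: "'a set \<Rightarrow> ('a \<Rightarrow> 'a \<Rightarrow> bool) \<Rightarrow> bool" where
  "simple_graph V E \<longleftrightarrow> finite V \<and> (\<forall>x y. E x y \<longrightarrow> x \<in> V \<and> y \<in> V)
     \<and> (\<forall>x y. E x y \<longrightarrow> E y x) \<and> (\<forall>x. \<not> E x x)"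

definition claw_free :: "'a set \<Rightarrow> ('a \<Rightarrow> 'a \<Rightarrow> bool) \<Rightarrow> bool" where
  "claw_free V E \<longleftrightarrow> \<not> (\<exists>c\<in>V. \<exists>a\<in>V. \<exists>b\<in>V. \<exists>d\<in>V.
      E c a \<and> E c b \<and> E c d \<and> a \<noteq> b \<and> a \<noteq> d \<and> b \<noteq> d
      \<and> \<not> E a b \<and> \<not> E a d \<and> \<not> E b d)"

definition closed_nbhd :: "'a set \<Rightarrow> ('a \<Rightarrow> 'a \<Rightarrow> bool) \<Rightarrow> 'a \<Rightarrow> 'a set" where
  "closed_nbhd V E v = {u \<in> V. u = v \<or> E v u}"

definition induced_adj :: "('a \<Rightarrow> 'a \<Rightarrow> bool) \<Rightarrow> 'a set \<Rightarrow> 'a \<Rightarrow> 'a \<Rightarrow> bool" where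
  "induced_adj E W x y \<longleftrightarrow> x \<in> W \<and> y \<in> W \<and> E x y"

definition independent_dominating_set :: "'a set \<Rightarrow> ('a \<Rightarrow> 'a \<Rightarrow> bool) \<Rightarrow> 'a set \<Rightarrow> bool" where
  "independent_dominating_set V E S \<longleftrightarrow> S \<subseteq> V
     \<and> (\<forall>x\<in>S. \<forall>y\<in>S. \<not> E x y)
     \<and> (\<forall>x\<in>V - S. \<exists>y\<in>S. E x y)"

end

theory Submission
  imports Defs
begin

theorem lemma2:
  fixes V :: "'a set" and E :: "'a \<Rightarrow> 'a \<Rightarrow> bool" and v :: 'a and k :: nat
  assumes "simple_graph V E" and "claw_free V E" and "v \<in> V" and "k \<ge> 1"
  shows "(\<exists>S. independent_dominating_set V E S \<and> card S \<le> k \<and> v \<in> S)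
     \<longleftrightarrow> (\<exists>T. independent_dominating_set (V - closed_nbhd V E v)
                  (induced_adj E (V - closed_nbhd V E v)) T \<and> card T \<le> k - 1)"
proof
  have fin: "finite V" and sym: "\<And>x y. E x y \<Longrightarrow> E y x" and irr: "\<And>x. \<not> E x x"
    and inV: "\<And>x y. E x y \<Longrightarrow> x \<in> V \<and> y \<in> V"
    using assms(1) unfolding simple_graph_def by auto
  let ?W = "V - closed_nbhd V E v"
  show "\<exists>T. independent_dominating_set ?W (induced_adj E ?W) T \<and> card T \<le> k - 1"
    if hS: "\<exists>S. independent_dominating_set V E S \<and> card S \<le> k \<and> v \<in> S"
  proof -
    obtain S where S: "independent_dominating_set V E S" "card S \<le> k" "v \<in> S" using hS by blast
    have finS: "finite S" using S(1) fin unfolding independent_dominating_set_def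
      using finite_subset by blast
    have sub: "S - {v} \<subseteq> ?W" using S(1) S(3) unfolding independent_dominating_set_def closed_nbhd_def
      by auto
    have "independent_dominating_set ?W (induced_adj E ?W) (S - {v})"
      unfolding independent_dominating_set_def
    proof (intro conjI ballI)
      show "S - {v} \<subseteq> ?W" by (rule sub)
      fix x y assume "x \<in> S - {v}" "y \<in> S - {v}"
      then show "\<not> induced_adj E ?W x y" using S(1) unfolding independent_dominating_set_def induced_adj_def by auto
    next
      fix x assume x: "x \<in> ?W - (S - {v})"
      then have "x \<in> V - S" "\<not> E v x" "x \<noteq> v" unfolding closed_nbhd_def by auto
      then obtain y where y: "y \<in> S" "E x y" using S(1) unfolding independent_dominating_set_def by blast
      have "y \<noteq> v" using y \<open>\<not> E v x\<close> sym by auto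
      then show "\<exists>y\<in>S - {v}. induced_adj E ?W x y" using y x sub unfolding induced_adj_def by auto
    qed
    moreover have "card (S - {v}) \<le> k - 1" using S finS by auto
    ultimately show ?thesis by blast
  qed
  show "\<exists>S. independent_dominating_set V E S \<and> card S \<le> k \<and> v \<in> S"
    if hT: "\<exists>T. independent_dominating_set ?W (induced_adj E ?W) T \<and> card T \<le> k - 1"
  proof -
    obtain T where T: "independent_dominating_set ?W (induced_adj E ?W) T" "card T \<le> k - 1"
      using hT by blast
    have TW: "T \<subseteq> ?W" using T(1) unfolding independent_dominating_set_def by auto
    have finT: "finite T" using TW fin finite_subset by blast
    have "independent_dominating_set V E (insert v T)"
      unfolding independent_dominating_set_def
    proof (intro conjI ballI)
      show "insert v T \<subseteq> V" using TW assms(3) by auto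
      fix x y assume x: "x \<in> insert v T" and y: "y \<in> insert v T"
      show "\<not> E x y"
      proof
        assume e: "E x y"
        show False
        proof (cases "x = v")
          case True then show ?thesis using y e irr TW inV unfolding closed_nbhd_def by auto
        next
          case False
          show ?thesis
          proof (cases "y = v")
            case True then show ?thesis using x e sym irr TW inV unfolding closed_nbhd_def by auto
          next
            case False
            then show ?thesis using \<open>x \<noteq> v\<close> x y e T(1) TW
              unfolding independent_dominating_set_def induced_adj_def by blast
          qed
        qed
      qed
    next
      fix x assume x: "x \<in> V - insert v T"
      show "\<exists>y\<in>insert v T. E x y"
      proof (cases "x \<in> closed_nbhd V E v")
        case True then have "E v x" using x unfolding closed_nbhd_def by auto
        then show ?thesis using sym by auto
      next
        case False
        then have "x \<in> ?W - T" using x by auto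
        then obtain y where "y \<in> T" "induced_adj E ?W x y" using T(1)
          unfolding independent_dominating_set_def by blast
        then show ?thesis unfolding induced_adj_def by auto
      qed
    qed
    moreover have "card (insert v T) \<le> k" using T(2) finT assms(4) card_insert_le[of T v]
      by (simp add: card_insert_if split: if_splits)
    ultimately show ?thesis by blast
  qed
qed

end
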